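(* For every integer $v\ge1$, $$B^{(2v)}_{2v}(v)=(-1)^v\,4v\sum_{n=0}^{v-1}(2\pi)^{2n-2v}\,\Gamma(2v-2n)\,s(v,n)\,\zeta(2v-2n)=(-1)^v\,2^{1-2v}\,\Gamma(2v+1)\sum_{n=0}^{v-1}\pi^{2n-2v}\,c_{2v,n}\,\zeta(2v-2n).$$
   Context: The Nörlund polynomials $B^{(a)}_n(x)$ are defined by $\left(\frac{t}{e^t-1}\right)^a e^{xt}=\sum_{n\ge0}B^{(a)}_n(x)\frac{t^n}{n!}$. For integers $v\ge1$ and $0\le n\le v-1$, $s(v,n)$ denotes the $n$-th elementary symmetric polynomial evaluated at $1^2,2^2,\dots,(v-1)^2$, with $s(v,0)=1$. The generalized cosecant numbers $c_{\rho,k}$ are the coefficients in $\left(\frac{x}{\sin x}\right)^{\rho}=\sum_{k\ge0}c_{\rho,k}x^{2k}$. $\zeta$ is the Riemann zeta function. *)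

theory Defs
  imports "HOL-Analysis.Analysis" "HOL-Computational_Algebra.Formal_Power_Series"
begin

definition zeta :: "real \<Rightarrow> real" where
  "zeta s = (\<Sum>k. 1 / (real (Suc k)) powr s)"

text \<open>Generating function (t/(e^t-1))^a e^{xt}; (e^t-1)/t is the shift of e^t-1.\<close>
definition norlund_fps :: "nat \<Rightarrow> real \<Rightarrow> real fps" where
  "norlund_fps a x = (inverse (fps_shift 1 (fps_exp 1 - 1))) ^ a * fps_exp x"

definition norlund :: "nat \<Rightarrow> nat \<Rightarrow> real \<Rightarrow> real" where
  "norlund a n x = fact n * fps_nth (norlund_fps a x) n"

definition sq_esym :: "nat \<Rightarrow> nat \<Rightarrow> real" where
  "sq_esym v n = (\<Sum>S\<in>{S. S \<subseteq> {1..<v} \<and> card S = n}. \<Prod>k\<in>S. (real k)^2)"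

text \<open>Generalized cosecant numbers: (x/sin x)^rho = sum c_{rho,k} x^{2k}.\<close>
definition cosec_num :: "nat \<Rightarrow> nat \<Rightarrow> real" where
  "cosec_num rho k = fps_nth ((inverse (fps_shift 1 (fps_sin 1))) ^ rho) (2 * k)"

end

theory Submission
  imports Defs "HOL-Complex_Analysis.Complex_Analysis"
begin

unbundle no vec_syntax
unbundle fps_syntax

definition sf :: "real fps" where "sf = fps_shift 1 (fps_sin 1)"
definition cf :: "real fps" where "cf = fps_cos 1"
definition uf :: "real fps" where "uf = inverse sf"
definition evfps :: "real fps \<Rightarrow> bool" where "evfps F \<longleftrightarrow> (\<forall>n. odd n \<longrightarrow> F $ n = 0)"

lemma sf_nth: "sf $ n = (if even n then (-1)^(n div 2) / fact (Suc n) else 0)"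
  by (auto simp: sf_def fps_sin_def algebra_simps elim!: evenE)

lemma cf_nth: "cf $ n = (if even n then (-1)^(n div 2) / fact n else 0)"
  by (simp add: cf_def fps_cos_def)

lemma sf0 [simp]: "sf $ 0 = 1" by (simp add: sf_nth)

lemma uf_sf [simp]: "uf * sf = 1" unfolding uf_def by (rule inverse_mult_eq_1) simp
lemma sf_uf [simp]: "sf * uf = 1" unfolding uf_def by (rule inverse_mult_eq_1') simp

lemma sin_X_sf: "fps_sin 1 = fps_X * (sf :: real fps)"
  by (rule fps_ext) (auto simp: sf_def)

lemma theta_nth: "(fps_X * fps_deriv F) $ j = of_nat j * (F :: real fps) $ j"
  by (cases j) auto

lemma theta_mult: "fps_X * fps_deriv (F * G) = (fps_X * fps_deriv F) * G + F * (fps_X * fps_deriv (G :: real fps))"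
  by (simp add: algebra_simps)

lemma theta_sf: "fps_X * fps_deriv sf = cf - sf"
proof (rule fps_ext)
  fix n
  show "(fps_X * fps_deriv sf) $ n = (cf - sf) $ n"
  proof (cases "even n")
    case True
    have fs: "fact (Suc n) = (real n + 1) * (fact n :: real)" by simp
    have e: "real n / fact (Suc n) = 1/fact n - 1/(fact (Suc n) :: real)"
    proof -
      have p: "(fact n::real) > 0" by simp
      have "0 < fact n * (1 + real n)" using p by (intro mult_pos_pos) auto
      then have "fact n + fact n * real n \<noteq> 0" by (simp add: algebra_simps)
      then show ?thesis unfolding fs using p by (simp add: field_simps del: fact_Suc)
    qed
    have "real n * ((-1)^(n div 2) / fact (Suc n)) = (-1)^(n div 2) / fact n - (-1)^(n div 2) / (fact (Suc n) :: real)"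
      using arg_cong[OF e, of "\<lambda>x. (-1)^(n div 2) * x"] by (simp add: algebra_simps)
    then show ?thesis using True
      by (simp add: theta_nth sf_nth cf_nth del: fact_Suc)
  qed (simp add: theta_nth sf_nth cf_nth)
qed

lemma theta_cf: "fps_X * fps_deriv cf = - (fps_X^2 * sf)"
  by (simp add: cf_def fps_cos_deriv sin_X_sf power2_eq_square fps_const_neg[symmetric])

lemma pyth: "cf^2 + fps_X^2 * sf^2 = 1"
  using fps_sin_cos_sum_of_squares[of "1::real"] by (simp add: sin_X_sf cf_def power_mult_distrib)

lemma theta_uf: "fps_X * fps_deriv uf = uf - cf * uf^2"
proof -
  have "fps_X * fps_deriv uf = - (fps_X * fps_deriv sf) * uf^2"
    unfolding uf_def by (simp add: fps_inverse_deriv)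
  also have "\<dots> = (sf - cf) * uf^2" by (simp add: theta_sf)
  also have "\<dots> = (sf*uf) * uf - cf * uf^2" by (simp add: power2_eq_square algebra_simps)
  finally show ?thesis by simp
qed

lemma theta_ufp: "fps_X * fps_deriv (uf^m) = of_nat m * uf^m - of_nat m * cf * uf^(m+1)"
proof (cases m)
  case 0 then show ?thesis by simp
next
  case (Suc k)
  have "fps_deriv (uf^(Suc k)) = of_nat (Suc k) * fps_deriv uf * uf^k"
    by (simp only: fps_deriv_power') simp
  then have "fps_X * fps_deriv (uf^m) = of_nat m * (fps_X * fps_deriv uf) * uf^k"
    by (simp add: Suc algebra_simps)
  also have "\<dots> = of_nat m * (uf - cf * uf^2) * uf^k" by (simp add: theta_uf)
  finally show ?thesis by (simp add: Suc algebra_simps power2_eq_square)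
qed

definition th :: "real fps \<Rightarrow> real fps" where "th F = fps_X * fps_deriv F"

lemma th_add: "th (F + G) = th F + th G" by (simp add: th_def algebra_simps)
lemma th_diff: "th (F - G) = th F - th G" by (simp add: th_def algebra_simps)
lemma th_mult: "th (F * G) = th F * G + F * th G" unfolding th_def by (simp add: algebra_simps)
lemma th_cmult: "th (of_nat c * F) = of_nat c * th F"
  by (simp add: th_def fps_of_nat[symmetric])

lemma recur_abstract:
  fixes P U1 U2 M S C X :: "'a::comm_ring_1"
  assumes "S * U1 = P" "P = S^2 * U2" "U2 = C^2 * U2 + X^2 * S^2 * U2"
  shows "M * (M + 1) * U2 =
     M * (M * P - M * (C * U1)) - M * (- (X^2 * S) * U1 + C * ((M + 1) * U1 - (M + 1) * C * U2))
     - (2 * M + 1) * (M * P - M * (C * U1)) + M * (M + 1) * P + M^2 * X^2 * P"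
proof -
  have "M * (M * P - M * (C * U1)) - M * (- (X^2 * S) * U1 + C * ((M + 1) * U1 - (M + 1) * C * U2))
     - (2 * M + 1) * (M * P - M * (C * U1)) + M * (M + 1) * P + M^2 * X^2 * P
     = M * X^2 * (S * U1) + M * (M+1) * C^2 * U2 + M^2 * X^2 * P"
    by (simp add: algebra_simps power2_eq_square)
  also have "\<dots> = M * (M + 1) * (C^2 * U2 + X^2 * S^2 * U2)"
    using assms(1,2) by (simp add: algebra_simps power2_eq_square)
  finally show ?thesis using assms(3) by simp
qed

lemma recur_fps:
  "of_nat (m*(m+1)) * uf^(m+2) = th (th (uf^m)) - of_nat (2*m+1) * th (uf^m)
      + of_nat (m*(m+1)) * uf^m + of_nat (m^2) * fps_X^2 * uf^m"
proof -
  have t1: "th (uf^m) = of_nat m * uf^m - of_nat m * (cf * uf^(m+1))"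
    using theta_ufp[of m] by (simp add: th_def algebra_simps)
  have t2: "th (uf^(m+1)) = of_nat (m+1) * uf^(m+1) - of_nat (m+1) * cf * uf^(m+2)"
    using theta_ufp[of "m+1"] by (simp add: th_def algebra_simps)
  have t3: "th (cf * uf^(m+1)) = - (fps_X^2 * sf) * uf^(m+1) + cf * th (uf^(m+1))"
  proof -
    have "th cf = - (fps_X^2 * sf)" using theta_cf by (simp add: th_def)
    then show ?thesis by (simp only: th_mult)
  qed
  have tt: "th (th (uf^m)) = of_nat m * th (uf^m) - of_nat m * th (cf * uf^(m+1))"
    by (simp add: t1 th_diff th_cmult)
  have r1: "sf * uf^(m+1) = uf^m"
  proof -
    have "sf * uf^(m+1) = (sf * uf) * uf^m" by (simp only: power_Suc Suc_eq_plus1[symmetric] mult.assoc)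
    then show ?thesis by simp
  qed
  have r2: "uf^m = sf^2 * uf^(m+2)"
  proof -
    have "sf^2 * uf^(m+2) = (sf*uf)^2 * uf^m" by (simp only: power_add power_mult_distrib mult_ac)
    then show ?thesis by simp
  qed
  have r3: "uf^(m+2) = cf^2 * uf^(m+2) + fps_X^2 * sf^2 * uf^(m+2)"
    using pyth by (metis distrib_right mult.assoc mult_1)
  show ?thesis
    unfolding tt unfolding t3 unfolding t2 t1 of_nat_mult of_nat_add of_nat_power of_nat_1 of_nat_numeral
    by (rule recur_abstract[OF r1 r2 r3])
qed

lemma nat_cmult_nth: "(of_nat c * F) $ j = real c * (F :: real fps) $ j"
  by (simp only: fps_of_nat[symmetric] fps_mult_left_const_nth)

lemma th_nth: "th F $ j = real j * F $ j" by (simp add: th_def theta_nth)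

lemma recur_nth:
  "real (m*(m+1)) * (uf^(m+2)) $ j
     = (real j^2 - real (2*m+1) * real j + real (m*(m+1))) * (uf^m) $ j
       + real (m^2) * (if j < 2 then 0 else (uf^m) $ (j-2))"
proof -
  have "(of_nat (m*(m+1)) * uf^(m+2)) $ j = (th (th (uf^m)) - of_nat (2*m+1) * th (uf^m)
      + of_nat (m*(m+1)) * uf^m + of_nat (m^2) * (fps_X^2 * uf^m)) $ j"
    using recur_fps[of m] by (simp add: mult.assoc)
  then show ?thesis
    by (simp only: nat_cmult_nth fps_add_nth fps_sub_nth th_nth fps_X_power_mult_nth)
       (simp add: algebra_simps power2_eq_square)
qed

lemma uf0 [simp]: "uf $ 0 = 1"
proof -
  have "(uf * sf) $ 0 = 1" by (simp only: uf_sf) simp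
  then show ?thesis by (simp del: uf_sf sf_uf)
qed

lemma ufp0 [simp]: "(uf ^ m) $ 0 = 1"
  by (simp add: fps_power_zeroth)

lemma esym_insert:
  fixes f :: "nat \<Rightarrow> real"
  assumes A: "finite A" and a: "a \<notin> A"
  shows "(\<Sum>S\<in>{S. S \<subseteq> insert a A \<and> card S = Suc n}. \<Prod>k\<in>S. f k)
       = (\<Sum>S\<in>{S. S \<subseteq> A \<and> card S = Suc n}. \<Prod>k\<in>S. f k)
         + f a * (\<Sum>S\<in>{S. S \<subseteq> A \<and> card S = n}. \<Prod>k\<in>S. f k)"
proof -
  let ?L = "{S. S \<subseteq> A \<and> card S = Suc n}" and ?M = "{S. S \<subseteq> A \<and> card S = n}"
  have eq: "{S. S \<subseteq> insert a A \<and> card S = Suc n} = ?L \<union> insert a ` ?M"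
  proof (intro equalityI subsetI)
    fix S assume S: "S \<in> {S. S \<subseteq> insert a A \<and> card S = Suc n}"
    then have fS: "finite S" using A by (auto intro: finite_subset)
    show "S \<in> ?L \<union> insert a ` ?M"
    proof (cases "a \<in> S")
      case True
      then have "S = insert a (S - {a})" by auto
      moreover have "S - {a} \<in> ?M" using S True fS by auto
      ultimately show ?thesis by blast
    next
      case False
      then show ?thesis using S by auto
    qed
  next
    fix S assume "S \<in> ?L \<union> insert a ` ?M"
    then show "S \<in> {S. S \<subseteq> insert a A \<and> card S = Suc n}"
    proof
      assume "S \<in> ?L" then show ?thesis by auto
    next
      assume "S \<in> insert a ` ?M"
      then obtain T where T: "T \<in> ?M" "S = insert a T" by auto
      then have "finite T" "a \<notin> T" using A a by (auto intro: finite_subset)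
      then show ?thesis using T by auto
    qed
  qed
  have fin: "finite ?L" "finite ?M" using A by (auto intro: finite_subset[of _ "Pow A"])
  have disj: "?L \<inter> insert a ` ?M = {}" using a by auto
  have inj: "inj_on (insert a) ?M" unfolding inj_on_def using a
    by (metis (mono_tags, lifting) insert_ident mem_Collect_eq subsetD)
  have "(\<Sum>S\<in>insert a ` ?M. \<Prod>k\<in>S. f k) = (\<Sum>T\<in>?M. \<Prod>k\<in>insert a T. f k)"
    by (rule sum.reindex[OF inj, unfolded o_def])
  also have "\<dots> = (\<Sum>T\<in>?M. f a * (\<Prod>k\<in>T. f k))"
  proof (rule sum.cong[OF refl])
    fix T assume "T \<in> ?M"
    then have "finite T" "a \<notin> T" using A a by (auto intro: finite_subset)
    then show "(\<Prod>k\<in>insert a T. f k) = f a * (\<Prod>k\<in>T. f k)" by simp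
  qed
  finally have "(\<Sum>S\<in>insert a ` ?M. \<Prod>k\<in>S. f k) = f a * (\<Sum>T\<in>?M. \<Prod>k\<in>T. f k)"
    by (simp add: sum_distrib_left)
  moreover have "finite (insert a ` ?M)" using fin by simp
  ultimately show ?thesis unfolding eq using fin disj by (simp add: sum.union_disjoint)
qed

lemma sq_esym_Suc:
  assumes "v \<ge> 1"
  shows "sq_esym (Suc v) (Suc n) = sq_esym v (Suc n) + (real v)^2 * sq_esym v n"
proof -
  have "{1..<Suc v} = insert v {1..<v}" using assms by auto
  then show ?thesis unfolding sq_esym_def
    using esym_insert[where A="{1..<v}" and a=v and n=n and f="\<lambda>k. (real k)^2"] by simp
qed

lemma sq_esym_0 [simp]: "sq_esym v 0 = 1"
proof -
  have "{S. S \<subseteq> {1..<v} \<and> card S = 0} = {{}}"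
  proof (intro equalityI subsetI)
    fix S assume "S \<in> {S. S \<subseteq> {1..<v} \<and> card S = 0}"
    then have "finite S" "card S = 0" by (auto intro: finite_subset)
    then show "S \<in> {{}}" by simp
  qed auto
  then show ?thesis by (simp add: sq_esym_def)
qed

lemma sq_esym_big:
  assumes "v \<le> n" "v \<ge> 1"
  shows "sq_esym v n = 0"
proof -
  have c: "card S \<noteq> n" if "S \<subseteq> {1..<v}" for S
  proof -
    have "card S \<le> card {1..<v}" using that by (intro card_mono) auto
    then show "card S \<noteq> n" using assms by simp
  qed
  have e: "{S. S \<subseteq> {1..<v} \<and> card S = n} = {}" using c by auto
  show ?thesis unfolding sq_esym_def e by simp
qed




lemma cosec_formula:
  "n \<le> k \<Longrightarrow> (uf^(2*k+2)) $ (2*n) = 4^n * sq_esym (Suc k) n * fact (2*k+1-2*n) / fact (2*k+1)"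
proof (induction k arbitrary: n)
  case 0
  then show ?case by simp
next
  case (Suc k n)
  show ?case
  proof (cases n)
    case 0
    then show ?thesis by simp
  next
    case (Suc p)
    with Suc.prems have pk: "p \<le> k" by simp
    define A where "A = real (2*p+2)^2 - real (2*(2*k+2)+1) * real (2*p+2) + real ((2*k+2)*(2*k+2+1))"
    have rec: "real ((2*k+2)*(2*k+2+1)) * (uf^(2*k+2+2)) $ (2*p+2)
       = A * (uf^(2*k+2)) $ (2*p+2) + real ((2*k+2)^2) * (uf^(2*k+2)) $ (2*p)"
      using recur_nth[of "2*k+2" "2*p+2"] by (simp add: A_def)
    have IH2: "(uf^(2*k+2)) $ (2*p) = 4^p * sq_esym (Suc k) p * fact (2*k+1-2*p) / fact (2*k+1)"
      using Suc.IH[OF pk] .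
    have X: "A * (uf^(2*k+2)) $ (2*p+2) = 4^(p+1) * sq_esym (Suc k) (p+1) * fact (2*k+1-2*p) / fact (2*k+1)"
    proof (cases "p = k")
      case True
      have "A = 0" unfolding A_def True by (simp add: algebra_simps power2_eq_square)
      moreover have "sq_esym (Suc k) (p+1) = 0" using True by (intro sq_esym_big) auto
      ultimately show ?thesis by simp
    next
      case False
      then have "p < k" using pk by simp
      then obtain q where kq: "k = p + Suc q" using less_imp_Suc_add[of p k] by auto
      have IH1: "(uf^(2*k+2)) $ (2*(p+1)) = 4^(p+1) * sq_esym (Suc k) (p+1) * fact (2*k+1-2*(p+1)) / fact (2*k+1)"
        using Suc.IH[of "p+1"] kq by simp
      have e1: "2*k+1-2*(p+1) = 2*q+1" "2*k+1-2*p = Suc (Suc (2*q+1))" using kq by simp_all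
      have A: "A = real (Suc (Suc (2*q+1))) * real (Suc (2*q+1))"
        unfolding A_def kq by (simp add: algebra_simps power2_eq_square)
      define F where "F = (fact (2*q+1) :: real)"
      define D where "D = (fact (2*k+1) :: real)"
      have ff: "fact (Suc (Suc (2*q+1))) = real (Suc (Suc (2*q+1))) * real (Suc (2*q+1)) * F"
        unfolding F_def by (simp only: fact_Suc of_nat_mult mult_ac)
      have IH1': "(uf^(2*k+2)) $ (2*p+2) = 4^(p+1) * sq_esym (Suc k) (p+1) * F / D"
      proof -
        have i: "2*(p+1) = 2*p+2" by simp
        have e1b: "2*k+1-(2*p+2) = 2*q+1" using kq by simp
        show ?thesis using IH1 unfolding i e1b F_def[symmetric] D_def[symmetric] .
      qed
      show ?thesis unfolding e1(2) A ff IH1' D_def[symmetric] by (simp only: times_divide_eq_right mult_ac)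
    qed
    have s: "sq_esym (Suc (Suc k)) (Suc p) = sq_esym (Suc k) (Suc p) + (real (Suc k))^2 * sq_esym (Suc k) p"
      by (rule sq_esym_Suc) simp
    have f: "fact (2*Suc k+1) = real ((2*k+2)*(2*k+2+1)) * (fact (2*k+1) :: real)"
    proof -
      have "2*Suc k+1 = Suc (Suc (2*k+1))" by simp
      then show ?thesis by (simp only: fact_Suc) (simp add: algebra_simps)
    qed
    have e3: "2 * Suc k + 1 - 2 * Suc p = 2*k+1-2*p" by simp
    have pos: "real ((2*k+2)*(2*k+2+1)) > 0" by (simp only: of_nat_0_less_iff) simp
    have "real ((2*k+2)*(2*k+2+1)) * (uf^(2*Suc k+2)) $ (2*n)
        = real ((2*k+2)*(2*k+2+1)) * (4^n * sq_esym (Suc (Suc k)) n * fact (2*Suc k+1-2*n) / fact (2*Suc k+1))"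
    proof -
      define F where "F = (fact (2*k+1-2*p) :: real)"
      define D where "D = (fact (2*k+1) :: real)"
      define M where "M = real ((2*k+2)*(2*k+2+1))"
      define sA where "sA = sq_esym (Suc k) p"
      define sB where "sB = sq_esym (Suc k) (Suc p)"
      have Dnz: "D \<noteq> 0" unfolding D_def by simp
      have Mnz: "M \<noteq> 0" unfolding M_def by (simp only: of_nat_eq_0_iff) simp
      have N: "real ((2*k+2)^2) = 4*(real (Suc k))^2" by (simp add: power2_eq_square algebra_simps)
      have "M * (uf^(2*Suc k+2)) $ (2*n) = 4^(p+1)* sB*F/D + 4*(real (Suc k))^2*(4^p* sA*F/D)"
        using rec unfolding X IH2 N Suc M_def[symmetric] F_def[symmetric] D_def[symmetric]
          sA_def[symmetric] sB_def[symmetric] by (simp add: mult_2 add_ac sB_def)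
      also have "\<dots> = 4^(p+1)*(sB + (real (Suc k))^2* sA)*F/D"
        by (simp add: algebra_simps add_divide_distrib)
      also have "\<dots> = M * (4^n * sq_esym (Suc (Suc k)) n * F / (M*D))"
        unfolding Suc s sA_def[symmetric] sB_def[symmetric] using Mnz by simp
      finally have fin: "M * (uf^(2*Suc k+2)) $ (2*n) = M * (4^n * sq_esym (Suc (Suc k)) n * F / (M*D))" .
      have e3': "2*Suc k+1-2*n = 2*k+1-2*p" using Suc by simp
      show ?thesis unfolding e3' f unfolding F_def[symmetric] D_def[symmetric] M_def[symmetric]
        by (rule fin)
    qed
    moreover have ne: "real ((2*k+2)*(2*k+2+1)) \<noteq> 0" using pos by (simp only: less_irrefl)
    ultimately show ?thesis using mult_left_cancel[OF ne] by blast
  qed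
qed



definition rfl :: "real fps \<Rightarrow> real fps" where "rfl F = Abs_fps (\<lambda>n. (-1)^n * F $ n)"

lemma rfl_nth [simp]: "rfl F $ n = (-1)^n * F $ n" by (simp add: rfl_def)

lemma rfl_mult: "rfl (F * G) = rfl F * rfl G"
proof (rule fps_ext)
  fix n
  have "rfl (F * G) $ n = (\<Sum>i=0..n. (-1)^i * F$i * ((-1)^(n-i) * G$(n-i)))"
    by (simp add: fps_mult_nth sum_distrib_left)
       (intro sum.cong refl, simp add: mult_ac power_add[symmetric])
  then show "rfl (F * G) $ n = (rfl F * rfl G) $ n" by (simp add: fps_mult_nth mult_ac)
qed

lemma rfl_one [simp]: "rfl 1 = 1" by (rule fps_ext) simp

lemma evfps_iff: "evfps F \<longleftrightarrow> rfl F = F"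
proof
  assume h: "evfps F"
  show "rfl F = F"
  proof (rule fps_ext)
    fix n show "rfl F $ n = F $ n" using h by (cases "even n") (auto simp: evfps_def)
  qed
next
  assume h: "rfl F = F"
  show "evfps F" unfolding evfps_def
  proof (intro allI impI)
    fix n :: nat assume "odd n"
    have "rfl F $ n = F $ n" using h by simp
    then show "F $ n = 0" using \<open>odd n\<close> by simp
  qed
qed

lemma evfps_mult: "evfps F \<Longrightarrow> evfps G \<Longrightarrow> evfps (F * G)"
  by (simp add: evfps_iff rfl_mult)

lemma evfps_one: "evfps 1" by (simp add: evfps_iff)

lemma evfps_power: "evfps F \<Longrightarrow> evfps (F ^ k)"
  by (induction k) (simp_all add: evfps_one evfps_mult)

lemma evfps_inverse:
  assumes "evfps F" "F $ 0 \<noteq> 0"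
  shows "evfps (inverse F)"
proof -
  have "F * rfl (inverse F) = rfl F * rfl (inverse F)" using assms by (simp add: evfps_iff)
  also have "\<dots> = rfl (F * inverse F)" by (simp add: rfl_mult)
  also have "F * inverse F = 1" using assms(2) by (rule inverse_mult_eq_1')
  finally have "inverse F = rfl (inverse F)" by (intro fps_inverse_unique) simp
  then show ?thesis by (simp add: evfps_iff)
qed

lemma evfps_sf: "evfps sf" by (simp add: evfps_def sf_nth)
lemma evfps_cf: "evfps cf" by (simp add: evfps_def cf_nth)
lemma evfps_uf: "evfps uf" unfolding uf_def by (rule evfps_inverse[OF evfps_sf]) simp

definition psi :: "real fps \<Rightarrow> real fps" where
  "psi F = Abs_fps (\<lambda>n. if even n then (-1/4)^(n div 2) * F $ n else 0)"

lemma psi_nth [simp]: "psi F $ n = (if even n then (-1/4)^(n div 2) * F $ n else 0)"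
  by (simp add: psi_def)

lemma psi_mult:
  assumes F: "evfps F" and G: "evfps G"
  shows "psi (F * G) = psi F * psi G"
proof (rule fps_ext)
  fix n
  have tm: "psi F $ i * psi G $ (n - i) = (if even n then (-1/4)^(n div 2) * (F$i * G$(n-i)) else 0)"
    if "i \<le> n" for i
  proof (cases "even i")
    case True
    note ei = this
    show ?thesis
    proof (cases "even (n - i)")
      case True
      note eni = this
      then have en: "even n" using ei that by (metis dvd_add le_add_diff_inverse)
      have "i div 2 + (n - i) div 2 = n div 2" using ei eni that en
        by (elim evenE) auto
      then show ?thesis using ei eni en by (simp add: power_add[symmetric] mult_ac)
    next
      case False
      then have "G $ (n-i) = 0" using G by (simp add: evfps_def)
      moreover have "odd n \<or> \<not> even (n - i)" using False by simp
      ultimately show ?thesis using ei that by auto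
    qed
  next
    case False
    then have "F $ i = 0" using F by (simp add: evfps_def)
    then show ?thesis by simp
  qed
  have "(psi F * psi G) $ n = (\<Sum>i=0..n. psi F $ i * psi G $ (n - i))" by (simp add: fps_mult_nth)
  also have "\<dots> = (\<Sum>i=0..n. (if even n then (-1/4)^(n div 2) * (F$i * G$(n-i)) else 0))"
    by (intro sum.cong refl) (rule tm, simp)
  also have "\<dots> = psi (F * G) $ n" by (simp add: fps_mult_nth sum_distrib_left)
  finally show "psi (F * G) $ n = (psi F * psi G) $ n" ..
qed

lemma psi_one [simp]: "psi 1 = 1" by (rule fps_ext) simp

lemma psi_power: "evfps F \<Longrightarrow> psi (F ^ k) = psi F ^ k"
  by (induction k) (simp_all add: psi_mult evfps_power)

lemma psi_inverse:
  assumes "evfps F" "F $ 0 \<noteq> 0"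
  shows "psi (inverse F) = inverse (psi F)"
proof -
  have "psi F * psi (inverse F) = psi (F * inverse F)"
    using assms by (simp add: psi_mult evfps_inverse)
  also have "F * inverse F = 1" using assms(2) by (rule inverse_mult_eq_1')
  finally show ?thesis by (intro fps_inverse_unique[symmetric]) simp
qed

definition tf :: "real fps" where "tf = fps_shift 1 (fps_exp (1/2) - fps_exp (-1/2))"

lemma psi_sf: "psi sf = tf"
proof (rule fps_ext)
  fix n
  show "psi sf $ n = tf $ n"
  proof (cases "even n")
    case True
    then obtain j where j: "n = 2*j" by (elim evenE)
    have a: "(-1/4::real)^j * (-1)^j = (1/4)^j" by (simp add: power_mult_distrib[symmetric])
    have b: "(1/2::real)^(2*j+1) - (-1/2)^(2*j+1) = 2 * (1/4)^j * (1/2)"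
      by (simp add: power_mult power_add power2_eq_square)
    have "psi sf $ n = ((-1/4)^j * (-1)^j) / fact (Suc (2*j))"
      using j by (simp add: sf_nth del: fact_Suc)
    also have "\<dots> = (1/4)^j / fact (Suc (2*j))" by (simp only: a)
    also have "\<dots> = ((1/2)^(2*j+1) - (-1/2)^(2*j+1)) / fact (Suc (2*j))" by (simp only: b)
    also have "\<dots> = tf $ n" using j by (simp add: tf_def del: fact_Suc)
    finally show ?thesis .
  next
    case False
    then have "(-1/2::real)^(n+1) = (1/2)^(n+1)" by (simp add: power_divide)
    then show ?thesis using False by (simp add: sf_nth tf_def)
  qed
qed

lemma X_shift: "G $ 0 = 0 \<Longrightarrow> fps_X * fps_shift 1 G = (G :: real fps)"
  by (rule fps_ext) (case_tac n, simp_all)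

lemma E1_tf: "fps_shift 1 (fps_exp 1 - 1) * fps_exp (-1/2) = tf"
proof -
  let ?E = "fps_shift 1 (fps_exp (1::real) - 1)"
  have x: "fps_X * ?E = fps_exp 1 - 1" by (rule X_shift) simp
  have "fps_X * (?E * fps_exp (-1/2)) = (fps_exp 1 - 1) * fps_exp (-1/2)"
    by (simp only: mult.assoc[symmetric] x)
  also have "\<dots> = fps_exp (1/2) - fps_exp (-1/2)"
    by (simp add: algebra_simps fps_exp_add_mult[symmetric])
  finally have "fps_shift 1 (fps_X * (?E * fps_exp (-1/2))) = tf"
    by (simp add: tf_def)
  then show ?thesis by (simp only: mult.commute[of fps_X] fps_shift_times_fps_X')
qed

lemma norlund_psi: "norlund_fps (2* v) (real v) = psi (uf ^ (2* v))"
proof -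
  let ?E = "fps_shift 1 (fps_exp (1::real) - 1)"
  have e: "inverse (fps_exp (-1/2 :: real)) = fps_exp (1/2)"
    by (rule fps_inverse_unique) (simp add: fps_exp_add_mult[symmetric])
  have "inverse tf = inverse ?E * fps_exp (1/2)"
    unfolding E1_tf[symmetric] fps_inverse_mult e ..
  then have "inverse tf ^ (2* v) = inverse ?E ^ (2* v) * fps_exp (1/2) ^ (2* v)"
    by (simp add: power_mult_distrib)
  also have "fps_exp (1/2 :: real) ^ (2* v) = fps_exp (real v)"
    by (simp add: fps_exp_power_mult)
  finally have "inverse tf ^ (2* v) = norlund_fps (2* v) (real v)"
    by (simp add: norlund_fps_def)
  moreover have "psi uf = inverse tf"
    unfolding uf_def psi_sf[symmetric] by (rule psi_inverse[OF evfps_sf]) simp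
  ultimately show ?thesis by (simp add: psi_power evfps_uf)
qed

lemma norlund_cosec: "norlund (2* v) (2* v) (real v) = fact (2* v) * (-1/4)^v * (uf^(2* v)) $ (2* v)"
  unfolding norlund_def norlund_psi by simp

lemma cosec_uf: "cosec_num rho k = (uf ^ rho) $ (2*k)"
  by (simp add: cosec_num_def uf_def sf_def)

lemma resid0: "m \<ge> 1 \<Longrightarrow> (cf * uf^(m+1)) $ m = 0"
proof -
  assume m: "m \<ge> 1"
  have "(fps_X * fps_deriv (uf^m)) $ m = (of_nat m * uf^m - of_nat m * cf * uf^(m+1)) $ m"
    by (simp only: theta_ufp)
  then have "real m * (uf^m) $ m = real m * (uf^m) $ m - real m * (cf * uf^(m+1)) $ m"
    by (simp only: theta_nth fps_sub_nth mult.assoc nat_cmult_nth)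
  then show ?thesis using m by simp
qed

lemma sum_even_split:
  fixes v :: nat
  assumes "\<And>i. odd i \<Longrightarrow> g i = (0::real)"
  shows "(\<Sum>i=0..2* v. g i) = (\<Sum>n=0..v. g (2*n))"
proof (induction v)
  case 0 then show ?case by simp
next
  case (Suc v)
  have "(\<Sum>i=0..2*Suc v. g i) = (\<Sum>i=0..2* v. g i) + g (2* v+1) + g (2* v+2)"
    by (simp add: sum.atLeast0_atMost_Suc)
  also have "g (2* v+1) = 0" by (rule assms) simp
  finally show ?case using Suc by (simp add: sum.atLeast0_atMost_Suc)
qed



lemma not_Ints_ball:
  fixes z :: complex
  assumes "norm z < 1" "z \<noteq> 0"
  shows "z \<notin> \<int>"
proof
  assume "z \<in> \<int>"
  then obtain n where n: "z = of_int n" by (elim Ints_cases)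
  then have "\<bar>real_of_int n\<bar> < 1" using assms(1) by (simp add: norm_of_int)
  then have "n = 0" by linarith
  then show False using n assms(2) by simp
qed

lemma not_Ints_nonpos: "(z::complex) \<notin> \<int> \<Longrightarrow> z \<notin> \<int>\<^sub>\<le>\<^sub>0"
  using nonpos_Ints_subset_Ints by blast

lemma sin_pi_nz:
  fixes z :: complex
  assumes "z \<notin> \<int>"
  shows "sin (of_real pi * z) \<noteq> 0"
proof
  assume "sin (of_real pi * z) = 0"
  then obtain n :: int where "of_real pi * z = of_real (n * pi)" by (auto simp: sin_eq_0)
  then have "z = of_int n" by (simp add: field_simps)
  then show False using assms by simp
qed

lemma digamma_reflection:
  fixes z :: complex
  assumes z: "z \<notin> \<int>"
  shows "Digamma (1 - z) - Digamma z = of_real pi * cos (of_real pi * z) / sin (of_real pi * z)"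
proof -
  have z1: "z \<notin> \<int>\<^sub>\<le>\<^sub>0" using z by (rule not_Ints_nonpos)
  have "1 - z \<notin> \<int>"
  proof
    assume "1 - z \<in> \<int>"
    then have "1 - (1 - z) \<in> \<int>" by (intro Ints_diff) auto
    then show False using z by simp
  qed
  then have z2: "1 - z \<notin> \<int>\<^sub>\<le>\<^sub>0" by (rule not_Ints_nonpos)
  have sn: "sin (of_real pi * z) \<noteq> 0" using z by (rule sin_pi_nz)
  have eq: "(\<lambda>w::complex. Gamma w * Gamma (1 - w)) = (\<lambda>w. of_real pi / sin (of_real pi * w))"
    by (rule ext) (rule Gamma_reflection_complex)
  have d1: "((\<lambda>w. Gamma w * Gamma (1 - w)) has_field_derivative
      (Gamma z * Digamma z * Gamma (1 - z) - Gamma z * (Gamma (1 - z) * Digamma (1 - z)))) (at z)"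
    using z1 z2 by (auto intro!: derivative_eq_intros)
  have d2: "((\<lambda>w. of_real pi / sin (of_real pi * w)) has_field_derivative
      (- (of_real pi * (cos (of_real pi * z) * of_real pi)) / (sin (of_real pi * z))^2)) (at z)"
    using sn by (auto intro!: derivative_eq_intros simp: power2_eq_square)
  have h: "Gamma z * Digamma z * Gamma (1 - z) - Gamma z * (Gamma (1 - z) * Digamma (1 - z))
      = - (of_real pi * (cos (of_real pi * z) * of_real pi)) / (sin (of_real pi * z))^2"
    using DERIV_unique[OF d1 d2[folded eq]] .
  have "(Gamma z * Gamma (1 - z)) * (Digamma z - Digamma (1 - z))
      = - (of_real pi * (cos (of_real pi * z) * of_real pi)) / (sin (of_real pi * z))^2"
    unfolding h[symmetric] by (simp add: algebra_simps)
  then have "of_real pi / sin (of_real pi * z) * (Digamma z - Digamma (1 - z))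
      = - (of_real pi * (cos (of_real pi * z) * of_real pi)) / (sin (of_real pi * z))^2"
    by (simp only: Gamma_reflection_complex)
  then have "(of_real pi * sin (of_real pi * z)) * (of_real pi * cos (of_real pi * z) + Digamma z * sin (of_real pi * z))
      = (of_real pi * sin (of_real pi * z)) * (Digamma (1 - z) * sin (of_real pi * z))"
    using sn by (simp add: field_simps power2_eq_square)
  then have "of_real pi * cos (of_real pi * z) + Digamma z * sin (of_real pi * z)
      = Digamma (1 - z) * sin (of_real pi * z)"
    using sn by (subst (asm) mult_left_cancel) simp_all
  then show ?thesis using sn by (simp add: field_simps)
qed

definition qdf :: "complex \<Rightarrow> complex" where "qdf z = Digamma (1 - z) - Digamma (1 + z)"
definition hdf :: "complex \<Rightarrow> complex" where "hdf z = 1 + z * qdf z"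

lemma hd_sin:
  fixes z :: complex
  assumes "norm z < 1"
  shows "hdf z * sin (of_real pi * z) = of_real pi * z * cos (of_real pi * z)"
proof (cases "z = 0")
  case True then show ?thesis by simp
next
  case False
  have zi: "z \<notin> \<int>" using assms False by (rule not_Ints_ball)
  have sn: "sin (of_real pi * z) \<noteq> 0" using zi by (rule sin_pi_nz)
  have "Digamma (1 + z) = Digamma z + 1/z" using Digamma_plus1[OF False] by (simp add: add.commute)
  then have qz: "qdf z = of_real pi * cos (of_real pi * z) / sin (of_real pi * z) - 1/z"
    unfolding qdf_def using digamma_reflection[OF zi] by (simp add: algebra_simps)
  have "hdf z = z * (of_real pi * cos (of_real pi * z) / sin (of_real pi * z))"
    unfolding hdf_def qz using False by (simp add: field_simps)
  then show ?thesis using sn by (simp add: field_simps)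
qed

lemma ball11_nonpos: "ball (1::complex) 1 \<inter> \<int>\<^sub>\<le>\<^sub>0 = {}"
proof -
  have "x \<notin> \<int>\<^sub>\<le>\<^sub>0" if "x \<in> ball (1::complex) 1" for x
  proof
    assume "x \<in> \<int>\<^sub>\<le>\<^sub>0"
    then obtain n where n: "x = of_int n" "n \<le> 0" by (elim nonpos_Ints_cases)
    have "dist 1 x = norm (of_int (1 - n) :: complex)" using n by (simp add: dist_norm)
    also have "\<dots> = \<bar>real_of_int (1 - n)\<bar>" by (simp only: norm_of_int)
    also have "\<dots> \<ge> 1" using n by simp
    finally show False using that by simp
  qed
  then show ?thesis by blast
qed

lemma holo_digamma_ball: "Digamma holomorphic_on ball (1::complex) 1"
  by (rule holomorphic_on_Polygamma[OF ball11_nonpos])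

lemma hderiv_lin:
  fixes u :: complex
  assumes "norm u = 1"
  shows "(deriv ^^ n) (\<lambda>w. Digamma (u * w + 1)) 0 = u^n * Polygamma n 1"
proof -
  have "(deriv ^^ n) (\<lambda>w. Digamma (u * w + 1)) 0 = u^n * (deriv ^^ n) Digamma (u * 0 + 1)"
  proof (rule higher_deriv_compose_linear'[OF holo_digamma_ball])
    fix w :: complex assume "w \<in> ball 0 1"
    then show "u * w + 1 \<in> ball 1 1" using assms by (simp add: dist_norm norm_mult)
  qed auto
  also have "(deriv ^^ n) Digamma (u * 0 + 1) = Polygamma n (1::complex)"
    using higher_deriv_Polygamma[of "1::complex" n 0] by simp
  finally show ?thesis .
qed

lemma qd_analytic: "qdf analytic_on {0}"
  unfolding qdf_def[abs_def] by (auto intro!: analytic_intros)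

lemma qd_hderiv: "(deriv ^^ n) qdf 0 = (-1)^n * Polygamma n 1 - Polygamma n 1"
proof -
  have a1: "(\<lambda>w. Digamma (1 - w)) analytic_on {0::complex}" by (auto intro!: analytic_intros)
  have a2: "(\<lambda>w. Digamma (1 + w)) analytic_on {0::complex}" by (auto intro!: analytic_intros)
  have "(deriv ^^ n) qdf 0 = (deriv ^^ n) (\<lambda>w. Digamma (1 - w)) 0 - (deriv ^^ n) (\<lambda>w. Digamma (1 + w)) 0"
    unfolding qdf_def[abs_def] by (rule higher_deriv_diff_at[OF a1 a2])
  also have "(\<lambda>w. Digamma (1 - w)) = (\<lambda>w::complex. Digamma ((-1) * w + 1))" by (simp add: algebra_simps)
  also have "(\<lambda>w. Digamma (1 + w)) = (\<lambda>w::complex. Digamma (1 * w + 1))" by (simp add: algebra_simps)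
  finally show ?thesis by (simp only: hderiv_lin norm_one norm_minus_cancel) simp
qed

definition Qf :: "complex fps" where "Qf = fps_expansion qdf 0"

lemma Qf_nth: "Qf $ n = ((-1)^n * Polygamma n 1 - Polygamma n 1) / fact n"
  by (simp add: Qf_def fps_expansion_def qd_hderiv)

lemma hd_exp: "hdf has_fps_expansion (1 + fps_X * Qf)"
proof -
  have q: "qdf has_fps_expansion Qf" unfolding Qf_def by (rule analytic_at_imp_has_fps_expansion_0[OF qd_analytic])
  have "(\<lambda>z. 1 + z * qdf z) has_fps_expansion (1 + fps_X * Qf)"
    by (intro has_fps_expansion_add has_fps_expansion_mult has_fps_expansion_fps_X q has_fps_expansion_1)
  then show ?thesis by (simp add: hdf_def[abs_def])
qed

lemma fps_eq_trig: "(1 + fps_X * Qf) * fps_sin (of_real pi) = fps_const (of_real pi) * fps_X * fps_cos (of_real pi)"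
proof -
  have e1: "(\<lambda>z. hdf z * sin (of_real pi * z)) has_fps_expansion (1 + fps_X * Qf) * fps_sin (of_real pi)"
    by (intro has_fps_expansion_mult hd_exp has_fps_expansion_sin)
  have e2: "(\<lambda>z::complex. of_real pi * z * cos (of_real pi * z)) has_fps_expansion fps_const (of_real pi) * fps_X * fps_cos (of_real pi)"
    by (intro has_fps_expansion_mult has_fps_expansion_fps_X has_fps_expansion_const) (rule has_fps_expansion_cos)
  have ev: "eventually (\<lambda>z. hdf z * sin (of_real pi * z) = of_real pi * z * cos (of_real pi * z)) (nhds (0::complex))"
    using eventually_nhds_ball[OF zero_less_one, of "0::complex"]
    by eventually_elim (simp add: hd_sin)
  show ?thesis
  proof (rule fps_ext)
    fix n
    show "((1 + fps_X * Qf) * fps_sin (of_real pi)) $ n = (fps_const (of_real pi) * fps_X * fps_cos (of_real pi)) $ n"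
      unfolding fps_nth_fps_expansion[OF e1] fps_nth_fps_expansion[OF e2]
      by (rule arg_cong[where f = "\<lambda>x. x / fact n"], rule higher_deriv_cong_ev[OF ev refl])
  qed
qed

definition kzr :: "nat \<Rightarrow> real" where
  "kzr n = (if n = 0 then 1 else if even n then -2 * zeta (real n) / pi^n else 0)"

lemma zeta_nat: "zeta (real (Suc m)) = (\<Sum>k. inverse ((1 + real k) ^ Suc m))"
proof -
  have "(\<lambda>k. 1 / real (Suc k) powr real (Suc m)) = (\<lambda>k. inverse ((1 + real k) ^ Suc m))"
  proof
    fix k
    have "real (Suc k) powr real (Suc m) = real (Suc k) ^ Suc m" by (rule powr_realpow) simp
    then show "1 / real (Suc k) powr real (Suc m) = inverse ((1 + real k) ^ Suc m)"
      by (simp add: inverse_eq_divide)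
  qed
  then show ?thesis unfolding zeta_def by simp
qed

lemma polygamma_one_real:
  assumes "m \<noteq> 0"
  shows "Polygamma m (1::real) = (-1)^Suc m * fact m * zeta (real (Suc m))"
  unfolding Polygamma_def if_not_P[OF assms] zeta_nat by (rule refl)

lemma Qf_real: "Qf $ m = complex_of_real (kzr (Suc m) * pi^(Suc m))"
proof -
  have pc: "Polygamma m (1::complex) = complex_of_real (Polygamma m 1)"
    using Polygamma_of_real[of 1 m] by simp
  show ?thesis
  proof (cases "even m")
    case True
    then show ?thesis by (simp add: Qf_nth kzr_def)
  next
    case False
    then have m0: "m \<noteq> 0" using odd_pos[OF False] by simp
    have "Qf $ m = - 2 * Polygamma m (1::complex) / fact m" using False by (simp add: Qf_nth)
    also have "\<dots> = complex_of_real (- 2 * zeta (real (Suc m)))"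
      unfolding pc polygamma_one_real[OF m0] using False by simp
    also have "- 2 * zeta (real (Suc m)) = kzr (Suc m) * pi^(Suc m)"
      using False by (simp add: kzr_def)
    finally show ?thesis .
  qed
qed

lemma Kc_nth: "(1 + fps_X * Qf) $ i = complex_of_real (kzr i * pi^i)"
  by (cases i) (simp_all add: Qf_real kzr_def)

lemma sinc_nth: "fps_sin (complex_of_real c) $ k = complex_of_real (c^k * fps_sin 1 $ k)"
  by (simp add: fps_sin_def)

lemma cosc_nth: "fps_cos (complex_of_real c) $ k = complex_of_real (c^k * fps_cos 1 $ k)"
  by (simp add: fps_cos_def)

lemma kz_sf: "Abs_fps kzr * sf = cf"
proof (rule fps_ext)
  fix n
  have L: "((1 + fps_X * Qf) * fps_sin (of_real pi)) $ Suc n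
      = complex_of_real (\<Sum>i=0..Suc n. kzr i * pi^i * (pi^(Suc n - i) * fps_sin 1 $ (Suc n - i)))"
    by (simp only: fps_mult_nth Kc_nth sinc_nth of_real_sum of_real_mult mult.assoc)
  have "(\<Sum>i=0..Suc n. kzr i * pi^i * (pi^(Suc n - i) * fps_sin 1 $ (Suc n - i)))
      = (\<Sum>i=0..Suc n. pi^(Suc n) * (kzr i * fps_sin 1 $ (Suc n - i)))"
  proof (rule sum.cong[OF refl])
    fix i assume "i \<in> {0..Suc n}"
    then have "pi^i * pi^(Suc n - i) = pi^(Suc n)" by (simp add: power_add[symmetric])
    then show "kzr i * pi^i * (pi^(Suc n - i) * fps_sin 1 $ (Suc n - i)) = pi^(Suc n) * (kzr i * fps_sin 1 $ (Suc n - i))"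
      by (metis (no_types, lifting) mult.assoc mult.left_commute)
  qed
  also have "\<dots> = pi^(Suc n) * (\<Sum>i=0..n. kzr i * fps_sin 1 $ (Suc n - i))"
    by (simp add: sum_distrib_left[symmetric] sum.atLeast0_atMost_Suc)
  also have "(\<Sum>i=0..n. kzr i * fps_sin 1 $ (Suc n - i)) = (Abs_fps kzr * sf) $ n"
    by (simp add: fps_mult_nth sf_def Suc_diff_le)
  finally have L2: "((1 + fps_X * Qf) * fps_sin (of_real pi)) $ Suc n = complex_of_real (pi^(Suc n) * (Abs_fps kzr * sf) $ n)"
    using L by simp
  have R: "(fps_const (of_real pi) * fps_X * fps_cos (of_real pi)) $ Suc n = complex_of_real (pi^(Suc n) * cf $ n)"
    by (simp add: mult.assoc cosc_nth cf_def)
  have "pi^(Suc n) * (Abs_fps kzr * sf) $ n = pi^(Suc n) * cf $ n"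
    using L2 R fps_eq_trig by (metis of_real_eq_iff)
  then show "(Abs_fps kzr * sf) $ n = cf $ n" by simp
qed



lemma kz_eq: "Abs_fps kzr = cf * uf"
proof -
  have "Abs_fps kzr = Abs_fps kzr * (sf * uf)" by simp
  also have "\<dots> = cf * uf" by (simp only: mult.assoc[symmetric] kz_sf)
  finally show ?thesis .
qed

lemma key_identity:
  assumes v: "v \<ge> 1"
  shows "(uf^(2* v)) $ (2* v) = 2 * (\<Sum>n<v. (uf^(2* v)) $ (2*n) * zeta (real (2* v - 2*n)) / pi^(2* v - 2*n))"
proof -
  let ?U = "uf^(2* v)"
  have "0 = (cf * uf^(2* v+1)) $ (2* v)" using resid0[of "2* v"] v by simp
  also have "cf * uf^(2* v+1) = ?U * Abs_fps kzr" by (simp add: kz_eq algebra_simps)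
  also have "(?U * Abs_fps kzr) $ (2* v) = (\<Sum>i=0..2* v. ?U $ i * kzr (2* v - i))"
    by (simp add: fps_mult_nth)
  also have "\<dots> = (\<Sum>n=0..v. ?U $ (2*n) * kzr (2* v - 2*n))"
  proof (rule sum_even_split)
    fix i :: nat assume "odd i"
    then show "?U $ i * kzr (2* v - i) = 0" using evfps_power[OF evfps_uf, of "2* v"] by (simp add: evfps_def)
  qed
  also have "\<dots> = (\<Sum>n<v. ?U $ (2*n) * kzr (2* v - 2*n)) + ?U $ (2* v)"
    by (simp add: atLeast0AtMost lessThan_Suc_atMost[symmetric] kzr_def)
  also have "(\<Sum>n<v. ?U $ (2*n) * kzr (2* v - 2*n)) = - 2 * (\<Sum>n<v. ?U $ (2*n) * zeta (real (2* v - 2*n)) / pi^(2* v - 2*n))"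
    unfolding sum_distrib_left by (rule sum.cong[OF refl]) (simp add: kzr_def)
  finally show ?thesis by simp
qed

lemma powi_neg_nat: "(x::real) powi (- int m) = inverse (x ^ m)"
  by (simp add: power_int_minus)

lemma term_abs:
  fixes a b q P D K F s z :: real
  assumes "b * 2 = a * q" "D \<noteq> 0" "P \<noteq> 0" "a \<noteq> 0" "q \<noteq> 0"
  shows "4 * K * (inverse (a * P) * F * s * z) = inverse b * ((2 * K) * D) * (inverse P * (q * s * F / D) * z)"
proof -
  have b: "b = a * q / 2" using assms(1) by simp
  show ?thesis unfolding b using assms(2-5) by (simp add: field_simps)
qed

lemma term_eq:
  assumes "n \<le> k"
  shows "4 * real (Suc k) * ((2 * pi) powi (2 * int n - 2 * int (Suc k)) * Gamma (real (2 * Suc k - 2*n))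
            * sq_esym (Suc k) n * z)
       = 2 powi (1 - 2 * int (Suc k)) * Gamma (real (2 * Suc k + 1))
            * (pi powi (2 * int n - 2 * int (Suc k)) * cosec_num (2 * Suc k) n * z)"
proof -
  obtain d where kd: "k = n + d" using assms le_Suc_ex by blast
  have i1: "2 * int n - 2 * int (Suc k) = - int (2*d+2)" using kd by simp
  have i2: "1 - 2 * int (Suc k) = - int (2*n+2*d+1)" using kd by simp
  have g1: "Gamma (real (2 * Suc k - 2*n)) = fact (2*d+1)"
  proof -
    have "real (2 * Suc k - 2*n) = 1 + real (2*d+1)" using kd by simp
    then show ?thesis by (simp only: Gamma_fact)
  qed
  have g2: "Gamma (real (2 * Suc k + 1)) = fact (2*n+2*d+2)"
  proof -
    have "real (2 * Suc k + 1) = 1 + real (2*n+2*d+2)" using kd by simp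
    then show ?thesis by (simp only: Gamma_fact)
  qed
  have c: "cosec_num (2 * Suc k) n = 4^n * sq_esym (Suc k) n * fact (2*d+1) / fact (2*n+2*d+1)"
  proof -
    have "cosec_num (2 * Suc k) n = (uf^(2*k+2)) $ (2*n)" by (simp add: cosec_uf)
    also have "\<dots> = 4^n * sq_esym (Suc k) n * fact (2*k+1-2*n) / fact (2*k+1)"
      by (rule cosec_formula[OF assms])
    finally have x: "cosec_num (2 * Suc k) n = 4^n * sq_esym (Suc k) n * fact (2*k+1-2*n) / fact (2*k+1)" .
    have e: "2*k+1-2*n = 2*d+1" "2*k+1 = 2*n+2*d+1" using kd by simp_all
    show ?thesis using x unfolding e(1) unfolding e(2) .
  qed
  define F where "F = (fact (2*d+1) :: real)"
  define D where "D = (fact (2*n+2*d+1) :: real)"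
  define s where "s = sq_esym (Suc k) n"
  have fD: "(fact (2*n+2*d+2) :: real) = real (2*n+2*d+2) * D"
  proof -
    have e: "2*n+2*d+2 = Suc (2*n+2*d+1)" by simp
    show ?thesis unfolding D_def e by (rule fact_Suc)
  qed
  have Dnz: "D \<noteq> 0" unfolding D_def by simp
  have p1: "(2 * pi) ^ (2*d+2) = 2^(2*d+2) * pi^(2*d+2)" by (simp add: power_mult_distrib)
  have p2: "(2::real) ^ (2*n+2*d+1) * 2 = 2^(2*d+2) * 4^n"
  proof -
    have e: "2*n+2*d+2 = Suc (2*n+2*d+1)" by simp
    have "(2::real)^(2*n+2*d+2) = 2^(2*n+2*d+1)*2" unfolding e by (rule power_Suc2)
    moreover have e2: "2*n+2*d+2 = (2*d+2) + 2*n" by simp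
    have "(2::real)^(2*n+2*d+2) = 2^(2*d+2) * 2^(2*n)" unfolding e2 by (rule power_add)
    moreover have "(2::real)^(2*n) = 4^n" unfolding power_mult by simp
    ultimately show ?thesis by simp
  qed
  have pnz: "pi ^ (2*d+2) \<noteq> 0" by simp
  have kk: "real (Suc k) = real (n + d) + 1" using kd by simp
  have kk2: "real (2*n+2*d+2) = 2 * (real (n + d) + 1)" by simp
  show ?thesis
    unfolding i1 i2 g1 g2 c powi_neg_nat F_def[symmetric] D_def[symmetric] s_def[symmetric] fD p1 kk kk2
    by (rule term_abs[OF p2 Dnz pnz]) simp_all
qed

theorem mainTheorem12:
  fixes v :: nat
  assumes "v \<ge> 1"
  shows "norlund (2 * v) (2 * v) (real v)
           = (-1)^v * 4 * real v * (\<Sum>n<v. (2 * pi) powi (2 * int n - 2 * int v)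
                 * Gamma (real (2 * v - 2*n)) * sq_esym v n * zeta (real (2 * v - 2*n)))
       \<and> (-1)^v * 4 * real v * (\<Sum>n<v. (2 * pi) powi (2 * int n - 2 * int v)
                 * Gamma (real (2 * v - 2*n)) * sq_esym v n * zeta (real (2 * v - 2*n)))
           = (-1)^v * 2 powi (1 - 2 * int v) * Gamma (real (2 * v + 1))
               * (\<Sum>n<v. pi powi (2 * int n - 2 * int v) * cosec_num (2 * v) n * zeta (real (2 * v - 2*n)))"
proof -
  obtain k where v: "v = Suc k" using assms by (cases v) auto
  define t1 where "t1 n = (2 * pi) powi (2 * int n - 2 * int v) * Gamma (real (2 * v - 2*n)) * sq_esym v n * zeta (real (2 * v - 2*n))" for n
  define t2 where "t2 n = pi powi (2 * int n - 2 * int v) * cosec_num (2 * v) n * zeta (real (2 * v - 2*n))" for n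
  define W where "W = 2 powi (1 - 2 * int v) * Gamma (real (2 * v + 1))"
  have eq2: "4 * real v * (\<Sum>n<v. t1 n) = W * (\<Sum>n<v. t2 n)"
  proof -
    have "4 * real v * (\<Sum>n<v. t1 n) = (\<Sum>n<v. 4 * real v * t1 n)" by (simp add: sum_distrib_left)
    also have "\<dots> = (\<Sum>n<v. W * t2 n)"
    proof (rule sum.cong[OF refl])
      fix n assume "n \<in> {..<v}"
      then have "n \<le> k" using v by simp
      from term_eq[OF this, of "zeta (real (2 * v - 2*n))"]
      show "4 * real v * t1 n = W * t2 n" unfolding t1_def t2_def W_def v by simp
    qed
    also have "\<dots> = W * (\<Sum>n<v. t2 n)" by (simp add: sum_distrib_left)
    finally show ?thesis .
  qed
  have eq1: "norlund (2 * v) (2 * v) (real v) = (-1)^v * W * (\<Sum>n<v. t2 n)"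
  proof -
    let ?U = "uf^(2 * v)"
    have s2: "(\<Sum>n<v. t2 n) = (\<Sum>n<v. ?U $ (2*n) * zeta (real (2 * v - 2*n)) / pi^(2 * v - 2*n))"
    proof (rule sum.cong[OF refl])
      fix n assume "n \<in> {..<v}"
      then have e: "2 * int n - 2 * int v = - int (2 * v - 2*n)" by auto
      show "t2 n = ?U $ (2*n) * zeta (real (2 * v - 2*n)) / pi^(2 * v - 2*n)"
        unfolding t2_def e powi_neg_nat cosec_uf by (simp only: divide_inverse mult_ac)
    qed
    have w: "W = inverse (2^(2*k+1)) * fact (2 * v)"
    proof -
      have e: "1 - 2 * int v = - int (2*k+1)" using v by simp
      have "Gamma (real (2 * v + 1)) = fact (2 * v)"
      proof -
        have "real (2 * v + 1) = 1 + real (2 * v)" by simp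
        then show ?thesis by (simp only: Gamma_fact)
      qed
      then show ?thesis unfolding W_def e powi_neg_nat by simp
    qed
    have f4: "(-1/4::real)^v * 2 = (-1)^v * inverse (2^(2*k+1))"
    proof -
      have h4: "(4::real)^v = 2^(2*k+1) * 2"
      proof -
        have e: "2 * v = Suc (2*k+1)" using v by simp
        have "(4::real)^v = 2^(2 * v)" unfolding power_mult by simp
        also have "\<dots> = 2^(2*k+1) * 2" unfolding e by (rule power_Suc2)
        finally show ?thesis .
      qed
      show ?thesis unfolding power_divide h4 by (simp add: field_simps)
    qed
    have "norlund (2 * v) (2 * v) (real v) = fact (2 * v) * (-1/4)^v * ?U $ (2 * v)"
      by (rule norlund_cosec)
    also have "?U $ (2 * v) = 2 * (\<Sum>n<v. ?U $ (2*n) * zeta (real (2 * v - 2*n)) / pi^(2 * v - 2*n))"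
      using assms by (rule key_identity)
    finally show ?thesis unfolding s2 w using f4 by (simp add: mult_ac)
  qed
  show ?thesis
    using eq1 eq2 unfolding t1_def[symmetric] t2_def[symmetric] W_def
    by (simp add: mult.assoc)
qed


end
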